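(* There is a constant $C$ such that for every sufficiently large $n$ there exists a $C_4$-free $2$-planar graph on $n$ vertices with at least $2.5n-C$ edges.
   Context: All graphs are finite and simple. A graph is $k$-planar if it admits a drawing in the plane in which every edge is crossed at most $k$ times. A graph is $C_\ell$-free if it contains no cycle of length $\ell$ as a subgraph. (The paper states the edge count as $2.5n-O(1)$.) *)

theory Defs
  imports "HOL-Analysis.Analysis"
begin

definition simple_graph :: "'v set \<Rightarrow> 'v set set \<Rightarrow> bool" where
  "simple_graph V E \<longleftrightarrow> finite V \<and> E \<subseteq> {{u, v} | u v. u \<in> V \<and> v \<in> V \<and> u \<noteq> v}"

definition C4_free :: "'v set \<Rightarrow> 'v set set \<Rightarrow> bool" where
  "C4_free V E \<longleftrightarrow> \<not> (\<exists>a b c d. a \<in> V \<and> b \<in> V \<and> c \<in> V \<and> d \<in> V \<and> distinct [a, b, c, d] \<and>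
      {a, b} \<in> E \<and> {b, c} \<in> E \<and> {c, d} \<in> E \<and> {d, a} \<in> E)"

definition curve_interior :: "(real \<Rightarrow> real \<times> real) \<Rightarrow> (real \<times> real) set" where
  "curve_interior g = path_image g - {pathstart g, pathfinish g}"

definition is_drawing :: "'v set \<Rightarrow> 'v set set \<Rightarrow> ('v \<Rightarrow> real \<times> real)
    \<Rightarrow> ('v set \<Rightarrow> real \<Rightarrow> real \<times> real) \<Rightarrow> bool" where
  "is_drawing V E p \<gamma> \<longleftrightarrow> inj_on p V \<and>
     (\<forall>e\<in>E. (\<exists>u v. e = {u, v} \<and> pathstart (\<gamma> e) = p u \<and> pathfinish (\<gamma> e) = p v) \<and>
        arc (\<gamma> e) \<and> (\<forall>w\<in>V. p w \<notin> curve_interior (\<gamma> e))) \<and>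
     (\<forall>e\<in>E. \<forall>f\<in>E. e \<noteq> f \<longrightarrow> finite (curve_interior (\<gamma> e) \<inter> curve_interior (\<gamma> f)))"

definition crossings_on :: "'v set set \<Rightarrow> ('v set \<Rightarrow> real \<Rightarrow> real \<times> real) \<Rightarrow> 'v set \<Rightarrow> nat" where
  "crossings_on E \<gamma> e = (\<Sum>f\<in>E - {e}. card (curve_interior (\<gamma> e) \<inter> curve_interior (\<gamma> f)))"

definition k_planar :: "nat \<Rightarrow> 'v set \<Rightarrow> 'v set set \<Rightarrow> bool" where
  "k_planar k V E \<longleftrightarrow> (\<exists>p \<gamma>. is_drawing V E p \<gamma> \<and> (\<forall>e\<in>E. crossings_on E \<gamma> e \<le> k))"

end

theory Submission
  imports Defs
begin


definition T :: "real \<times> real \<Rightarrow> real \<times> real" where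
  "T p = (-2 * fst p + snd p, - fst p - 2 * snd p)"

definition Tp :: "nat \<Rightarrow> real \<times> real \<Rightarrow> real \<times> real" where
  "Tp j = T ^^ j"

definition N :: "real \<times> real \<Rightarrow> real" where
  "N p = (fst p)^2 + (snd p)^2"

definition orient :: "real \<times> real \<Rightarrow> real \<times> real \<Rightarrow> real \<times> real \<Rightarrow> real" where
  "orient a b c = (fst b - fst a) * (snd c - snd a) - (snd b - snd a) * (fst c - fst a)"

lemma T_linear: "linear T"
  by (rule linearI) (auto simp: T_def algebra_simps)

lemma T_inj: "inj T"
proof (rule injI)
  fix x y assume "T x = T y"
  then have "-2 * fst x + snd x = -2 * fst y + snd y" "- fst x - 2 * snd x = - fst y - 2 * snd y"
    by (auto simp: T_def)
  then have "fst x = fst y" "snd x = snd y" by linarith+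
  then show "x = y" by (simp add: prod_eq_iff)
qed

lemma Tp_0[simp]: "Tp 0 p = p" by (simp add: Tp_def)
lemma Tp_Suc: "Tp (Suc j) p = T (Tp j p)" by (simp add: Tp_def)
lemma Tp_add: "Tp (i + j) p = Tp i (Tp j p)" by (simp add: Tp_def funpow_add)

lemma Tp_inj: "inj (Tp j)"
proof (induction j)
  case 0 then show ?case by (simp add: Tp_def)
next
  case (Suc j)
  have "Tp (Suc j) = T \<circ> Tp j" by (auto simp: Tp_def)
  moreover have "inj (T \<circ> Tp j)" using Suc T_inj by (simp add: inj_compose)
  ultimately show ?case by (simp add: comp_def)
qed

lemma N_T: "N (T p) = 5 * N p"
  by (simp add: N_def T_def power2_eq_square algebra_simps)

lemma N_Tp: "N (Tp j p) = 5 ^ j * N p"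
  by (induction j) (simp_all add: Tp_Suc N_T)

lemma seg_T: "open_segment (T a) (T b) = T ` open_segment a b"
  by (rule open_segment_linear_image[OF T_linear T_inj])

lemma seg_Tp: "open_segment (Tp j a) (Tp j b) = Tp j ` open_segment a b"
proof (induction j)
  case 0 then show ?case by simp
next
  case (Suc j)
  then show ?case by (simp add: Tp_Suc seg_T image_image)
qed

lemma cseg_T: "closed_segment (T a) (T b) = T ` closed_segment a b"
  by (rule closed_segment_linear_image[OF T_linear])

lemma cseg_Tp: "closed_segment (Tp j a) (Tp j b) = Tp j ` closed_segment a b"
proof (induction j)
  case 0 then show ?case by simp
next
  case (Suc j)
  then show ?case by (simp add: Tp_Suc cseg_T image_image)
qed

lemma orient_comb: "orient a b ((1 - u) *\<^sub>R c + u *\<^sub>R d) = (1 - u) * orient a b c + u * orient a b d"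
  by (simp add: orient_def algebra_simps)

lemma orient_on: "x \<in> closed_segment a b \<Longrightarrow> orient a b x = 0"
proof -
  assume "x \<in> closed_segment a b"
  then obtain u where u: "x = (1 - u) *\<^sub>R a + u *\<^sub>R b" by (auto simp: in_segment)
  show ?thesis unfolding u by (simp add: orient_def algebra_simps)
qed

lemma sep1:
  assumes "orient a b c \<ge> 0" "orient a b d \<ge> 0" "orient a b c > 0 \<or> orient a b d > 0"
  shows "open_segment a b \<inter> open_segment c d = {}"
proof (rule ccontr)
  assume "open_segment a b \<inter> open_segment c d \<noteq> {}"
  then obtain x where x1: "x \<in> open_segment a b" and x2: "x \<in> open_segment c d" by blast
  from x1 have "orient a b x = 0" using orient_on by (auto simp: open_segment_def)
  moreover from x2 obtain u where u: "0 < u" "u < 1" "x = (1 - u) *\<^sub>R c + u *\<^sub>R d"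
    by (auto simp: in_segment)
  have "orient a b x > 0"
  proof -
    have "orient a b x = (1 - u) * orient a b c + u * orient a b d" using u(3) orient_comb by simp
    moreover have "(1 - u) * orient a b c \<ge> 0" "u * orient a b d \<ge> 0" using u assms by auto
    moreover have "(1 - u) * orient a b c > 0 \<or> u * orient a b d > 0" using u assms by auto
    ultimately show ?thesis by linarith
  qed
  ultimately show False by simp
qed

lemma orient_swap: "orient b a c = - orient a b c"
  by (simp add: orient_def algebra_simps)

definition sepable where
  "sepable a b c d \<longleftrightarrow>
     (orient a b c \<ge> 0 \<and> orient a b d \<ge> 0 \<and> (orient a b c > 0 \<or> orient a b d > 0)) \<or>
     (orient a b c \<le> 0 \<and> orient a b d \<le> 0 \<and> (orient a b c < 0 \<or> orient a b d < 0)) \<or>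
     (orient c d a \<ge> 0 \<and> orient c d b \<ge> 0 \<and> (orient c d a > 0 \<or> orient c d b > 0)) \<or>
     (orient c d a \<le> 0 \<and> orient c d b \<le> 0 \<and> (orient c d a < 0 \<or> orient c d b < 0))"

lemma sepable_disj:
  assumes "sepable a b c d" shows "open_segment a b \<inter> open_segment c d = {}"
proof -
  have s: "open_segment b a = open_segment a b" for a b :: "real \<times> real"
    by (simp add: open_segment_commute)
  from assms consider
     "orient a b c \<ge> 0 \<and> orient a b d \<ge> 0 \<and> (orient a b c > 0 \<or> orient a b d > 0)"
   | "orient b a c \<ge> 0 \<and> orient b a d \<ge> 0 \<and> (orient b a c > 0 \<or> orient b a d > 0)"
   | "orient c d a \<ge> 0 \<and> orient c d b \<ge> 0 \<and> (orient c d a > 0 \<or> orient c d b > 0)"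
   | "orient d c a \<ge> 0 \<and> orient d c b \<ge> 0 \<and> (orient d c a > 0 \<or> orient d c b > 0)"
    unfolding sepable_def orient_swap[of b a] orient_swap[of d c] by linarith
  then show ?thesis
  proof cases
    case 1 then show ?thesis using sep1 by blast
  next
    case 2 then show ?thesis using sep1[of b a c d] s by auto
  next
    case 3 then show ?thesis using sep1[of c d a b] by blast
  next
    case 4 then show ?thesis using sep1[of d c a b] s by blast
  qed
qed

definition dotp :: "real \<times> real \<Rightarrow> real \<times> real \<Rightarrow> real" where
  "dotp u v = fst u * fst v + snd u * snd v"

definition notin_crit where
  "notin_crit p a b \<longleftrightarrow> p = a \<or> p = b \<or> orient a b p \<noteq> 0 \<or>
     dotp (p - a) (b - a) < 0 \<or> dotp (p - b) (a - b) < 0"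

lemma notin_crit_ok:
  assumes "notin_crit p a b" shows "p \<notin> open_segment a b"
proof
  assume p: "p \<in> open_segment a b"
  then have pa: "p \<noteq> a" "p \<noteq> b" by (auto simp: open_segment_def)
  from p have "orient a b p = 0" using orient_on by (auto simp: open_segment_def)
  from p obtain u where u: "0 < u" "u < 1" "p = (1 - u) *\<^sub>R a + u *\<^sub>R b"
    by (auto simp: in_segment)
  have d1: "dotp (p - a) (b - a) = u * dotp (b - a) (b - a)"
    unfolding u(3) by (simp add: dotp_def algebra_simps)
  have d2: "dotp (p - b) (a - b) = (1 - u) * dotp (b - a) (b - a)"
    unfolding u(3) by (simp add: dotp_def algebra_simps)
  have "dotp (b - a) (b - a) \<ge> 0" by (simp add: dotp_def)
  then have "dotp (p - a) (b - a) \<ge> 0" "dotp (p - b) (a - b) \<ge> 0" using d1 d2 u by auto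
  with assms pa \<open>orient a b p = 0\<close> show False by (auto simp: notin_crit_def)
qed

lemma cross_unique:
  fixes a b c d x y :: "real \<times> real"
  assumes "(fst b - fst a) * (snd d - snd c) - (snd b - snd a) * (fst d - fst c) \<noteq> 0"
    and "x \<in> closed_segment a b" "x \<in> closed_segment c d"
    and "y \<in> closed_segment a b" "y \<in> closed_segment c d"
  shows "x = y"
proof -
  obtain s where s: "x = (1 - s) *\<^sub>R a + s *\<^sub>R b" using assms(2) by (auto simp: in_segment)
  obtain s' where s': "y = (1 - s') *\<^sub>R a + s' *\<^sub>R b" using assms(4) by (auto simp: in_segment)
  obtain t where t: "x = (1 - t) *\<^sub>R c + t *\<^sub>R d" using assms(3) by (auto simp: in_segment)
  obtain t' where t': "y = (1 - t') *\<^sub>R c + t' *\<^sub>R d" using assms(5) by (auto simp: in_segment)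
  define u where "u = s - s'"
  define v where "v = t - t'"
  have e1: "u * (fst b - fst a) = v * (fst d - fst c)"
    using arg_cong[OF s, of fst] arg_cong[OF s', of fst] arg_cong[OF t, of fst] arg_cong[OF t', of fst]
    by (simp add: u_def v_def algebra_simps)
  have e2: "u * (snd b - snd a) = v * (snd d - snd c)"
    using arg_cong[OF s, of snd] arg_cong[OF s', of snd] arg_cong[OF t, of snd] arg_cong[OF t', of snd]
    by (simp add: u_def v_def algebra_simps)
  have "u * ((fst b - fst a) * (snd d - snd c) - (snd b - snd a) * (fst d - fst c)) =
        (u * (fst b - fst a)) * (snd d - snd c) - (u * (snd b - snd a)) * (fst d - fst c)"
    by (simp add: algebra_simps)
  also have "\<dots> = 0" unfolding e1 e2 by (simp add: algebra_simps)
  finally have "u = 0" using assms(1) by simp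
  then show ?thesis using s s' by (simp add: u_def)
qed

lemma N_seg_upper:
  assumes "x \<in> closed_segment a b" shows "N x \<le> max (N a) (N b)"
proof -
  obtain u where u: "0 \<le> u" "u \<le> 1" "x = (1 - u) *\<^sub>R a + u *\<^sub>R b" using assms by (auto simp: in_segment)
  have "(1 - u) * N a + u * N b - N x = u * (1 - u) * N (a - b)"
    unfolding u(3) by (simp add: N_def power2_eq_square algebra_simps)
  moreover have "u * (1 - u) * N (a - b) \<ge> 0" using u by (simp add: N_def)
  moreover have "(1 - u) * N a + u * N b \<le> max (N a) (N b)"
  proof -
    have "(1 - u) * N a \<le> (1 - u) * max (N a) (N b)" using u by (intro mult_left_mono) auto
    moreover have "u * N b \<le> u * max (N a) (N b)" using u by (intro mult_left_mono) auto
    ultimately show ?thesis by (simp add: algebra_simps)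
  qed
  ultimately show ?thesis by linarith
qed



definition bpt :: "nat \<Rightarrow> real \<times> real" where
  "bpt r = (if r = 0 then (1, 0) else (-2, 1))"
definition rk :: "nat \<Rightarrow> nat" where "rk k = (if k = 3 then 0 else 1)"
definition sk :: "nat \<Rightarrow> nat" where "sk k = (if k \<ge> 3 then 1 else 0)"
definition dk :: "nat \<Rightarrow> nat" where
  "dk k = (if k = 0 then 4 else if k = 1 then 2 else if k = 2 then 1 else 3)"
definition A :: "nat \<Rightarrow> real \<times> real" where "A k = bpt (rk k)"
definition B :: "nat \<Rightarrow> real \<times> real" where "B k = Tp (dk k) (bpt (sk k))"

lemma Tp_num: "Tp (numeral n) p = T (Tp (pred_numeral n) p)"
  by (simp add: numeral_eq_Suc Tp_Suc)

lemma T_pair: "T (x, y) = (-2 * x + y, - x - 2 * y)" by (simp add: T_def)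

lemmas ev = A_def B_def bpt_def rk_def sk_def dk_def Tp_num Tp_Suc T_pair sepable_def orient_def

lemma k_cases: "k < 5 \<Longrightarrow> k = 0 \<or> k = 1 \<or> k = 2 \<or> k = 3 \<or> k = (4::nat)" by auto
lemma j_cases: "j \<le> 4 \<Longrightarrow> j = 0 \<or> j = 1 \<or> j = 2 \<or> j = 3 \<or> j = (4::nat)" by auto

lemma check_pairs:
  assumes "k < 5" "k' < 5" "j \<le> 4"
  shows "(k = k' \<and> j = 0) \<or> (k = 3 \<and> k' = 2 \<and> j = 1) \<or> (k = 4 \<and> k' = 3 \<and> j = 2) \<or>
     sepable (A k) (B k) (Tp j (A k')) (Tp j (B k'))"
  using k_cases[OF assms(1)] k_cases[OF assms(2)] j_cases[OF assms(3)]
  by (elim disjE) (simp_all add: ev)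

lemma check_vert1:
  assumes "k < 5" "r < 2" "j \<le> 4"
  shows "notin_crit (Tp j (bpt r)) (A k) (B k)"
  using k_cases[OF assms(1)] j_cases[OF assms(3)] assms(2)
  by (elim disjE) (auto simp add: ev notin_crit_def dotp_def less_Suc_eq)

lemma check_vert2:
  assumes "k < 5" "r < 2"
  shows "notin_crit (bpt r) (Tp 1 (A k)) (Tp 1 (B k))"
  using k_cases[OF assms(1)] assms(2)
  by (elim disjE) (auto simp add: ev notin_crit_def dotp_def less_Suc_eq)

lemma check_cross1:
  "(fst (B 3) - fst (A 3)) * (snd (Tp 1 (B 2)) - snd (Tp 1 (A 2))) -
   (snd (B 3) - snd (A 3)) * (fst (Tp 1 (B 2)) - fst (Tp 1 (A 2))) \<noteq> 0"
  by (simp add: ev)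

lemma check_cross2:
  "(fst (B 4) - fst (A 4)) * (snd (Tp 2 (B 3)) - snd (Tp 2 (A 3))) -
   (snd (B 4) - snd (A 4)) * (fst (Tp 2 (B 3)) - fst (Tp 2 (A 3))) \<noteq> 0"
  by (simp add: ev)

lemma conv_ge1:
  fixes p q u :: real
  assumes "1 \<le> p" "1 \<le> q" "0 \<le> u" "u \<le> 1"
  shows "1 \<le> (1 - u) * p + u * q"
proof -
  have "(1 - u) * p + u * q - 1 = (1 - u) * (p - 1) + u * (q - 1)" by (simp add: algebra_simps)
  moreover have "(1 - u) * (p - 1) \<ge> 0" "u * (q - 1) \<ge> 0" using assms by auto
  ultimately show ?thesis by linarith
qed

lemma sq_ge1: fixes t :: real assumes "1 \<le> \<bar>t\<bar>" shows "1 \<le> t^2"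
proof -
  have "1 * 1 \<le> \<bar>t\<bar> * \<bar>t\<bar>" using assms by (intro mult_mono) auto
  then show ?thesis by (simp add: power2_eq_square)
qed

lemma seg_lower:
  assumes x: "x \<in> closed_segment a b"
    and c: "(1 \<le> fst a \<and> 1 \<le> fst b) \<or> (fst a \<le> -1 \<and> fst b \<le> -1) \<or>
            (1 \<le> snd a \<and> 1 \<le> snd b) \<or> (snd a \<le> -1 \<and> snd b \<le> -1)"
  shows "1 \<le> N x"
proof -
  obtain u where u: "0 \<le> u" "u \<le> 1" "x = (1 - u) *\<^sub>R a + u *\<^sub>R b" using x by (auto simp: in_segment)
  have f: "fst x = (1 - u) * fst a + u * fst b" "snd x = (1 - u) * snd b + u * snd b - (1 - u) * snd b + (1 - u) * snd a"
    unfolding u(3) by (simp_all add: algebra_simps)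
  have g: "- fst x = (1 - u) * (- fst a) + u * (- fst b)" "snd x = (1 - u) * snd a + u * snd b"
     "- snd x = (1 - u) * (- snd a) + u * (- snd b)"
    unfolding u(3) by (simp_all add: algebra_simps)
  have "1 \<le> \<bar>fst x\<bar> \<or> 1 \<le> \<bar>snd x\<bar>"
    using c conv_ge1[OF _ _ u(1,2), of "fst a" "fst b"] conv_ge1[OF _ _ u(1,2), of "- fst a" "- fst b"]
      conv_ge1[OF _ _ u(1,2), of "snd a" "snd b"] conv_ge1[OF _ _ u(1,2), of "- snd a" "- snd b"]
      f(1) g by auto
  then show ?thesis
    using sq_ge1[of "fst x"] sq_ge1[of "snd x"] unfolding N_def
    by (auto simp: add_increasing add_increasing2)
qed

lemma base_bounds:
  assumes "k < 5" "x \<in> closed_segment (A k) (B k)"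
  shows "1 \<le> N x \<and> N x \<le> 625"
proof
  show "1 \<le> N x"
    apply (rule seg_lower[OF assms(2)])
    using k_cases[OF assms(1)] by (elim disjE) (simp_all add: ev)
  have "max (N (A k)) (N (B k)) \<le> 625"
    using k_cases[OF assms(1)] by (elim disjE) (simp_all add: ev N_def)
  then show "N x \<le> 625" using N_seg_upper[OF assms(2)] by linarith
qed

lemma scaled_lower:
  assumes "k < 5" "x \<in> closed_segment (Tp j (A k)) (Tp j (B k))"
  shows "5 ^ j \<le> N x"
proof -
  obtain y where y: "y \<in> closed_segment (A k) (B k)" "x = Tp j y"
    using assms(2) unfolding cseg_Tp by auto
  have "1 \<le> N y" using base_bounds[OF assms(1) y(1)] by simp
  then have "5 ^ j * 1 \<le> 5 ^ j * N y" by (intro mult_left_mono) auto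
  then show ?thesis using y(2) N_Tp by simp
qed

lemma open_closed: "x \<in> open_segment a b \<Longrightarrow> x \<in> closed_segment a b"
  by (simp add: open_segment_def)

lemma pow5_big: "5 \<le> j \<Longrightarrow> (625::real) < 5 ^ j"
proof -
  assume "5 \<le> j"
  then have "(5::real) ^ 5 \<le> 5 ^ j" by (intro power_increasing) auto
  then show ?thesis by simp
qed

lemma base_pair:
  assumes k: "k < 5" "k' < 5" and nd: "\<not> (k = k' \<and> j = 0)"
    and x: "x \<in> open_segment (A k) (B k)" "x \<in> open_segment (Tp j (A k')) (Tp j (B k'))"
  shows "(k = 3 \<and> k' = 2 \<and> j = 1) \<or> (k = 4 \<and> k' = 3 \<and> j = 2)"
proof (cases "j \<le> 4")
  case True
  show ?thesis
  proof (rule ccontr)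
    assume "\<not> ?thesis"
    then have "sepable (A k) (B k) (Tp j (A k')) (Tp j (B k'))"
      using check_pairs[OF k True] nd by auto
    then show False using sepable_disj x by blast
  qed
next
  case False
  have "N x \<le> 625" using base_bounds[OF k(1) open_closed[OF x(1)]] by simp
  moreover have "5 ^ j \<le> N x" using scaled_lower[OF k(2) open_closed[OF x(2)]] .
  moreover have "(625::real) < 5 ^ j" using False pow5_big by simp
  ultimately show ?thesis by linarith
qed

lemma base_unique:
  assumes k: "k < 5" "k' < 5" and nd: "\<not> (k = k' \<and> j = 0)"
    and x: "x \<in> open_segment (A k) (B k)" "x \<in> open_segment (Tp j (A k')) (Tp j (B k'))"
    and y: "y \<in> open_segment (A k) (B k)" "y \<in> open_segment (Tp j (A k')) (Tp j (B k'))"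
  shows "x = y"
proof -
  from base_pair[OF k nd x] consider "k = 3 \<and> k' = 2 \<and> j = 1" | "k = 4 \<and> k' = 3 \<and> j = 2" by blast
  then show ?thesis
  proof cases
    case 1
    then show ?thesis using cross_unique[OF check_cross1, of x y] x y open_closed by blast
  next
    case 2
    then show ?thesis using cross_unique[OF check_cross2, of x y] x y open_closed by blast
  qed
qed

lemma N_bpt: "r < 2 \<Longrightarrow> 1 \<le> N (bpt r) \<and> N (bpt r) \<le> 5"
  by (auto simp: bpt_def N_def)

lemma base_vert1:
  assumes "k < 5" "r < 2"
  shows "Tp j (bpt r) \<notin> open_segment (A k) (B k)"
proof (cases "j \<le> 4")
  case True
  then show ?thesis using notin_crit_ok check_vert1 assms by blast
next
  case False
  show ?thesis
  proof
    assume h: "Tp j (bpt r) \<in> open_segment (A k) (B k)"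
    have "N (Tp j (bpt r)) \<le> 625" using base_bounds[OF assms(1) open_closed[OF h]] by simp
    moreover have "5 ^ j * 1 \<le> N (Tp j (bpt r))" unfolding N_Tp
      using N_bpt[OF assms(2)] by (intro mult_left_mono) auto
    moreover have "(625::real) < 5 ^ j" using False pow5_big by simp
    ultimately show False by linarith
  qed
qed

lemma base_vert2:
  assumes "k < 5" "r < 2" "1 \<le> j"
  shows "bpt r \<notin> open_segment (Tp j (A k)) (Tp j (B k))"
proof (cases "j = 1")
  case True
  then show ?thesis using notin_crit_ok check_vert2 assms by blast
next
  case False
  show ?thesis
  proof
    assume h: "bpt r \<in> open_segment (Tp j (A k)) (Tp j (B k))"
    have "5 ^ j \<le> N (bpt r)" using scaled_lower[OF assms(1) open_closed[OF h]] .
    moreover have "(5::real) ^ 2 \<le> 5 ^ j" using False assms(3) by (intro power_increasing) auto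
    ultimately show False using N_bpt[OF assms(2)] by simp
  qed
qed



definition P :: "int \<Rightarrow> int \<Rightarrow> bool" where
  "P u v \<longleftrightarrow> (even u \<and> odd v \<and> v - u \<in> {-7,-3,-1,7}) \<or> (odd u \<and> even v \<and> u - v \<in> {-7,-3,-1,7})
     \<or> (odd u \<and> odd v \<and> (u - v = 6 \<or> v - u = 6))"

lemma P_sym: "P u v \<Longrightarrow> P v u" unfolding P_def by auto

lemma c4_even:
  assumes "even a" "P a b" "P b c" "P c d" "P d a" "a \<noteq> c" "b \<noteq> d"
  shows False
proof -
  have ob: "odd b" "b - a \<in> {-7,-3,-1,7}" using assms(1,2) unfolding P_def by auto
  have od: "odd d" "d - a \<in> {-7,-3,-1,7}" using assms(1,5) unfolding P_def by auto
  show False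
  proof (cases "even c")
    case True
    have "b - c \<in> {-7,-3,-1,7}" "d - c \<in> {-7,-3,-1,7}" using True assms(3,4) ob od unfolding P_def by auto
    then show False using ob od assms(6,7) by auto
  next
    case False
    have "b - c = 6 \<or> c - b = 6" "d - c = 6 \<or> c - d = 6" using False assms(3,4) ob od unfolding P_def by auto
    then show False using ob od assms(6,7) by auto
  qed
qed

lemma c4_odd:
  assumes "odd a" "odd b" "odd c" "odd d" "P a b" "P b c" "P c d" "P d a" "a \<noteq> c" "b \<noteq> d"
  shows False
  using assms unfolding P_def by auto

lemma c4:
  assumes "P a b" "P b c" "P c d" "P d a" "a \<noteq> c" "b \<noteq> d"
  shows False
proof -
  consider "even a" | "even b" | "even c" | "even d" | "odd a \<and> odd b \<and> odd c \<and> odd d" by blast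
  then show False
  proof cases
    case 1 then show ?thesis using c4_even[of a b c d] assms by blast
  next
    case 2 then show ?thesis using c4_even[of b c d a] assms by blast
  next
    case 3 then show ?thesis using c4_even[of c d a b] assms by blast
  next
    case 4 then show ?thesis using c4_even[of d a b c] assms by blast
  next
    case 5 then show ?thesis using c4_odd[of a b c d] assms by blast
  qed
qed


definition pos :: "nat \<Rightarrow> real \<times> real" where
  "pos v = Tp (v div 2) (bpt (v mod 2))"
definition st :: "nat \<Rightarrow> nat \<Rightarrow> nat" where "st k i = 2 * i + rk k"
definition en :: "nat \<Rightarrow> nat \<Rightarrow> nat" where "en k i = 2 * (i + dk k) + sk k"
definition edge :: "nat \<Rightarrow> nat \<Rightarrow> nat set" where "edge k i = {st k i, en k i}"
definition segE :: "nat \<Rightarrow> nat \<Rightarrow> (real \<times> real) set" where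
  "segE k i = open_segment (Tp i (A k)) (Tp i (B k))"
definition cr :: "nat \<Rightarrow> nat \<Rightarrow> nat \<Rightarrow> nat \<Rightarrow> bool" where
  "cr k i k' i' \<longleftrightarrow> (k = 3 \<and> k' = 2 \<and> i' = i + 1) \<or> (k = 4 \<and> k' = 3 \<and> i' = i + 2) \<or>
                    (k = 2 \<and> k' = 3 \<and> i = i' + 1) \<or> (k = 3 \<and> k' = 4 \<and> i = i' + 2)"

lemma rk_le: "rk k < 2" by (simp add: rk_def)
lemma sk_le: "sk k < 2" by (simp add: sk_def)
lemma dk_ge: "1 \<le> dk k" by (simp add: dk_def)

lemma pos_st: "pos (st k i) = Tp i (A k)"
proof -
  have "(2 * i + rk k) div 2 = i" "(2 * i + rk k) mod 2 = rk k" using rk_le[of k] by auto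
  then show ?thesis by (simp add: pos_def st_def A_def)
qed

lemma pos_en: "pos (en k i) = Tp i (B k)"
proof -
  have "(2 * (i + dk k) + sk k) div 2 = i + dk k" "(2 * (i + dk k) + sk k) mod 2 = sk k"
    by (auto simp: sk_def)
  then show ?thesis by (simp add: pos_def en_def B_def Tp_add)
qed

lemma st_less_en: "st k i < en k i"
  using rk_le[of k] dk_ge[of k] by (simp add: st_def en_def)

lemma en_le: "en k i \<le> 2 * i + 8"
  by (simp add: en_def dk_def sk_def)

lemma edge_inj:
  assumes "k < 5" "k' < 5" "edge k i = edge k' i'"
  shows "k = k' \<and> i = i'"
proof -
  have "st k i = st k' i' \<and> en k i = en k' i'"
    using assms(3) st_less_en[of k i] st_less_en[of k' i'] unfolding edge_def
    by (metis doubleton_eq_iff less_not_refl2 order_less_asym)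
  then have e1: "2 * i + rk k = 2 * i' + rk k'" and e2: "2 * (i + dk k) + sk k = 2 * (i' + dk k') + sk k'"
    by (auto simp: st_def en_def)
  have m: "(2 * i + rk k) mod 2 = rk k" "(2 * i' + rk k') mod 2 = rk k'" by (auto simp: rk_def)
  have r: "rk k = rk k'" using e1 m by metis
  then have ii: "i = i'" using e1 by simp
  then have "2 * dk k + sk k = 2 * dk k' + sk k'" using e2 by simp
  then have "k = k'"
    using r k_cases[OF assms(1)] k_cases[OF assms(2)]
    by (elim disjE) (simp_all add: rk_def sk_def dk_def)
  then show ?thesis using ii by simp
qed

lemma segE_shift:
  assumes "i \<le> i'"
  shows "segE k i \<inter> segE k' i' =
     Tp i ` (open_segment (A k) (B k) \<inter> open_segment (Tp (i' - i) (A k')) (Tp (i' - i) (B k')))"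
proof -
  have e: "Tp i' p = Tp i (Tp (i' - i) p)" for p
    using assms Tp_add[of i "i' - i" p] by simp
  have "segE k i = Tp i ` open_segment (A k) (B k)" by (simp add: segE_def seg_Tp)
  moreover have "segE k' i' = Tp i ` open_segment (Tp (i' - i) (A k')) (Tp (i' - i) (B k'))"
    by (simp add: segE_def e seg_Tp)
  ultimately show ?thesis by (simp add: image_Int[OF Tp_inj])
qed

lemma pair_main_le:
  assumes k: "k < 5" "k' < 5" and ne: "(k, i) \<noteq> (k', i')" and le: "i \<le> i'"
    and x: "x \<in> segE k i" "x \<in> segE k' i'"
  shows "cr k i k' i'"
proof -
  from x segE_shift[OF le, of k k'] obtain y where
    y: "y \<in> open_segment (A k) (B k)" "y \<in> open_segment (Tp (i' - i) (A k')) (Tp (i' - i) (B k'))"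
    by blast
  have nd: "\<not> (k = k' \<and> i' - i = 0)" using ne le by auto
  from base_pair[OF k nd y] le show ?thesis unfolding cr_def by auto
qed

lemma pair_main:
  assumes k: "k < 5" "k' < 5" and ne: "(k, i) \<noteq> (k', i')"
    and x: "x \<in> segE k i" "x \<in> segE k' i'"
  shows "cr k i k' i'"
proof (cases "i \<le> i'")
  case True show ?thesis using pair_main_le[OF k ne True x] by blast
next
  case False
  then have "cr k' i' k i" using pair_main_le[OF k(2,1) _ _ x(2,1)] ne by auto
  then show ?thesis unfolding cr_def by auto
qed

lemma pair_unique_le:
  assumes k: "k < 5" "k' < 5" and ne: "(k, i) \<noteq> (k', i')" and le: "i \<le> i'"
    and x: "x \<in> segE k i" "x \<in> segE k' i'" and y: "y \<in> segE k i" "y \<in> segE k' i'"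
  shows "x = y"
proof -
  from x segE_shift[OF le, of k k'] obtain x' where
    x': "x' \<in> open_segment (A k) (B k)" "x' \<in> open_segment (Tp (i' - i) (A k')) (Tp (i' - i) (B k'))"
       "x = Tp i x'"
    by blast
  from y segE_shift[OF le, of k k'] obtain y' where
    y': "y' \<in> open_segment (A k) (B k)" "y' \<in> open_segment (Tp (i' - i) (A k')) (Tp (i' - i) (B k'))"
       "y = Tp i y'"
    by blast
  have nd: "\<not> (k = k' \<and> i' - i = 0)" using ne le by auto
  have "x' = y'" using base_unique[OF k nd x'(1,2) y'(1,2)] .
  then show ?thesis using x'(3) y'(3) by simp
qed

lemma pair_unique:
  assumes k: "k < 5" "k' < 5" and ne: "(k, i) \<noteq> (k', i')"
    and x: "x \<in> segE k i" "x \<in> segE k' i'" and y: "y \<in> segE k i" "y \<in> segE k' i'"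
  shows "x = y"
proof (cases "i \<le> i'")
  case True show ?thesis using pair_unique_le[OF k ne True x y] by blast
next
  case False
  then show ?thesis using pair_unique_le[OF k(2,1) _ _ x(2,1) y(2,1)] ne by auto
qed

lemma vert_notin:
  assumes "k < 5"
  shows "pos v \<notin> segE k i"
proof -
  define iv where "iv = v div 2"
  define r where "r = v mod 2"
  have r: "r < 2" by (simp add: r_def)
  have pv: "pos v = Tp iv (bpt r)" by (simp add: pos_def iv_def r_def)
  show ?thesis
  proof (cases "i \<le> iv")
    case True
    have "segE k i = Tp i ` open_segment (A k) (B k)" by (simp add: segE_def seg_Tp)
    moreover have "pos v = Tp i (Tp (iv - i) (bpt r))" using pv True Tp_add[of i "iv - i"] by simp
    ultimately show ?thesis
      using base_vert1[OF assms r, of "iv - i"] inj_image_mem_iff[OF Tp_inj] by metis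
  next
    case False
    have e: "Tp i p = Tp iv (Tp (i - iv) p)" for p
      using False Tp_add[of iv "i - iv" p] by simp
    have "segE k i = Tp iv ` open_segment (Tp (i - iv) (A k)) (Tp (i - iv) (B k))"
      by (simp add: segE_def e seg_Tp)
    moreover have "1 \<le> i - iv" using False by simp
    ultimately show ?thesis
      using base_vert2[OF assms r, of "i - iv"] inj_image_mem_iff[OF Tp_inj] pv by metis
  qed
qed

lemma Tp_Suc': "Tp (Suc j) p = Tp j (T p)"
  using Tp_add[of j 1 p] by (simp add: Tp_Suc)

lemma N_pos: "N (pos v) = 5 ^ (v div 2 + v mod 2)"
proof -
  have "v mod 2 = 0 \<or> v mod 2 = 1" by auto
  moreover have "N (1, 0) = 1" "N (-2, 1) = 5" by (simp_all add: N_def)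
  ultimately show ?thesis by (auto simp: pos_def N_Tp bpt_def)
qed

lemma pos_inj: "pos u = pos v \<Longrightarrow> u = v"
proof -
  assume h: "pos u = pos v"
  then have "(5::real) ^ (u div 2 + u mod 2) = 5 ^ (v div 2 + v mod 2)" using N_pos by metis
  then have s: "u div 2 + u mod 2 = v div 2 + v mod 2" using power_inject_exp[of "5::real"] by simp
  have T10: "T (1, 0) \<noteq> (-2, 1)" by (simp add: T_def)
  show "u = v"
  proof (cases "u mod 2 = v mod 2")
    case True then show ?thesis using s by (metis div_mult_mod_eq add_right_cancel)
  next
    case False
    then have "(u mod 2 = 0 \<and> v mod 2 = 1) \<or> (u mod 2 = 1 \<and> v mod 2 = 0)" by presburger
    then show ?thesis
    proof (elim disjE conjE)
      assume c1: "u mod 2 = 0" "v mod 2 = 1"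
      then have "u div 2 = v div 2 + 1" using s by simp
      then have "pos u = Tp (v div 2) (T (1, 0))" using c1
        by (simp add: pos_def bpt_def Tp_Suc')
      moreover have "pos v = Tp (v div 2) (-2, 1)" using c1 by (simp add: pos_def bpt_def)
      ultimately have "T (1, 0) = (-2, 1)" using h Tp_inj by (metis injD)
      then show ?thesis using T10 by blast
    next
      assume c2: "u mod 2 = 1" "v mod 2 = 0"
      then have "v div 2 = u div 2 + 1" using s by simp
      then have "pos v = Tp (u div 2) (T (1, 0))" using c2
        by (simp add: pos_def bpt_def Tp_Suc')
      moreover have "pos u = Tp (u div 2) (-2, 1)" using c2 by (simp add: pos_def bpt_def)
      ultimately have "T (1, 0) = (-2, 1)" using h Tp_inj by (metis injD)
      then show ?thesis using T10 by blast
    qed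
  qed
qed



definition Eset :: "nat \<Rightarrow> nat set set" where
  "Eset n = (\<lambda>(k, i). edge k i) ` {(k, i). k < 5 \<and> en k i < n}"

definition gam :: "nat set \<Rightarrow> real \<Rightarrow> real \<times> real" where
  "gam e = linepath (pos (Min e)) (pos (Max e))"

lemma Min_edge: "Min (edge k i) = st k i" and Max_edge: "Max (edge k i) = en k i"
  using st_less_en[of k i] by (auto simp: edge_def)

lemma ci_edge: "curve_interior (gam (edge k i)) = segE k i"
  by (simp add: curve_interior_def gam_def Min_edge Max_edge pos_st pos_en segE_def open_segment_def)

lemma Eset_E: "e \<in> Eset n \<Longrightarrow> \<exists>k i. k < 5 \<and> en k i < n \<and> e = edge k i"
  by (auto simp: Eset_def)

lemma edge_P:
  assumes "k < 5" shows "P (int (st k i)) (int (en k i))"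
  using k_cases[OF assms]
  by (elim disjE) (auto simp: P_def st_def en_def rk_def sk_def dk_def)

lemma Eset_P:
  assumes "{a, b} \<in> Eset n" shows "P (int a) (int b)"
proof -
  obtain k i where ki: "k < 5" "{a, b} = edge k i" using Eset_E[OF assms] by blast
  then have "(a = st k i \<and> b = en k i) \<or> (a = en k i \<and> b = st k i)"
    by (auto simp: edge_def doubleton_eq_iff)
  then show ?thesis using edge_P[OF ki(1), of i] P_sym by auto
qed

lemma seg_int_finite:
  assumes "k < 5" "k' < 5" "(k, i) \<noteq> (k', i')"
  shows "finite (segE k i \<inter> segE k' i') \<and> card (segE k i \<inter> segE k' i') \<le> 1"
proof (cases "segE k i \<inter> segE k' i' = {}")
  case True then show ?thesis by simp
next
  case False
  then obtain x where x: "x \<in> segE k i \<inter> segE k' i'" by blast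
  have "segE k i \<inter> segE k' i' \<subseteq> {x}" using pair_unique[OF assms] x by blast
  then show ?thesis using card_mono[of "{x}"] finite_subset[of _ "{x}"] by auto
qed

lemma cr_set_card: "card {(k', i'). cr k i k' i'} \<le> 2 \<and> finite {(k', i'). cr k i k' i'}"
proof -
  have sub: "{(k', i'). cr k i k' i'} \<subseteq>
     (if k = 3 then {(2, i + 1), (4, i - 2)} else if k = 4 then {(3, i + 2)}
      else if k = 2 then {(3, i - 1)} else {})"
    by (auto simp: cr_def)
  have c: "card (if k = 3 then {(2::nat, i + 1), (4, i - 2)} else if k = 4 then {(3, i + 2)}
      else if k = 2 then {(3, i - 1)} else {}) \<le> 2"
    by (auto simp: card_insert_if)
  have f: "finite (if k = 3 then {(2::nat, i + 1), (4, i - 2)} else if k = 4 then {(3, i + 2)}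
      else if k = 2 then {(3, i - 1)} else {})" by simp
  show ?thesis using card_mono[OF f sub] c finite_subset[OF sub f] by linarith
qed

lemma crossings_bound:
  assumes "e \<in> Eset n"
  shows "crossings_on (Eset n) gam e \<le> 2"
proof -
  obtain k i where ki: "k < 5" "en k i < n" "e = edge k i" using Eset_E[OF assms] by blast
  define G where "G = (\<lambda>(k', i'). edge k' i') ` {(k', i'). cr k i k' i'}"
  have finE: "finite (Eset n)"
  proof -
    have "{(k, i). k < 5 \<and> en k i < n} \<subseteq> {..<5} \<times> {..<n}"
      by (auto simp: en_def)
    then have "finite {(k, i). k < 5 \<and> en k i < n}" by (rule finite_subset) simp
    then show ?thesis unfolding Eset_def by (rule finite_imageI)
  qed
  have bound: "card (curve_interior (gam e) \<inter> curve_interior (gam f)) \<le> (if f \<in> G then 1 else 0)"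
    if f: "f \<in> Eset n - {e}" for f
  proof -
    obtain k' i' where ki': "k' < 5" "en k' i' < n" "f = edge k' i'" using Eset_E f by blast
    have ne: "(k, i) \<noteq> (k', i')" using f ki ki' by auto
    have ci: "curve_interior (gam e) \<inter> curve_interior (gam f) = segE k i \<inter> segE k' i'"
      using ki ki' ci_edge by simp
    show ?thesis
    proof (cases "f \<in> G")
      case True then show ?thesis using seg_int_finite[OF ki(1) ki'(1) ne] ci by simp
    next
      case False
      have "segE k i \<inter> segE k' i' = {}"
      proof (rule ccontr)
        assume "segE k i \<inter> segE k' i' \<noteq> {}"
        then obtain x where "x \<in> segE k i" "x \<in> segE k' i'" by blast
        then have "cr k i k' i'" using pair_main[OF ki(1) ki'(1) ne] by blast
        then have "f \<in> G" using ki' by (auto simp: G_def)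
        then show False using False by blast
      qed
      then show ?thesis using ci False by simp
    qed
  qed
  have "crossings_on (Eset n) gam e \<le> (\<Sum>f\<in>Eset n - {e}. (if f \<in> G then 1 else 0))"
    unfolding crossings_on_def by (rule sum_mono) (rule bound)
  also have "\<dots> = card {f \<in> Eset n - {e}. f \<in> G}"
    using finE by (simp add: sum.inter_filter[symmetric])
  also have "\<dots> \<le> card G"
  proof -
    have "finite G" using cr_set_card by (simp add: G_def)
    then show ?thesis by (intro card_mono) auto
  qed
  also have "\<dots> \<le> card {(k', i'). cr k i k' i'}" unfolding G_def
    using cr_set_card by (intro card_image_le) simp
  also have "\<dots> \<le> 2" using cr_set_card by simp
  finally show ?thesis .
qed

lemma drawing: "is_drawing {..<n} (Eset n) pos gam"
  unfolding is_drawing_def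
proof (intro conjI ballI impI)
  show "inj_on pos {..<n}" using pos_inj by (auto simp: inj_on_def)
next
  fix e assume e: "e \<in> Eset n"
  obtain k i where ki: "k < 5" "en k i < n" "e = edge k i" using Eset_E[OF e] by blast
  show "\<exists>u v. e = {u, v} \<and> pathstart (gam e) = pos u \<and> pathfinish (gam e) = pos v"
  proof (intro exI conjI)
    show "e = {st k i, en k i}" using ki by (simp add: edge_def)
    show "pathstart (gam e) = pos (st k i)" using ki by (simp add: gam_def Min_edge)
    show "pathfinish (gam e) = pos (en k i)" using ki by (simp add: gam_def Max_edge)
  qed
  have "pos (st k i) \<noteq> pos (en k i)" using pos_inj st_less_en[of k i] by (metis less_irrefl)
  then show "arc (gam e)" using ki by (simp add: gam_def Min_edge Max_edge)
  fix w assume "w \<in> {..<n}"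
  show "pos w \<notin> curve_interior (gam e)" using ki ci_edge vert_notin by simp
next
  fix e f assume e: "e \<in> Eset n" and f: "f \<in> Eset n" and ef: "e \<noteq> f"
  obtain k i where ki: "k < 5" "en k i < n" "e = edge k i" using Eset_E[OF e] by blast
  obtain k' i' where ki': "k' < 5" "en k' i' < n" "f = edge k' i'" using Eset_E[OF f] by blast
  have ne: "(k, i) \<noteq> (k', i')" using ef ki ki' by auto
  show "finite (curve_interior (gam e) \<inter> curve_interior (gam f))"
    using seg_int_finite[OF ki(1) ki'(1) ne] ki ki' ci_edge by simp
qed

lemma card_Eset: "5 * ((n - 8) div 2) \<le> card (Eset n)"
proof -
  define D where "D = {(k, i). k < 5 \<and> en k i < n}"
  have inj: "inj_on (\<lambda>(k, i). edge k i) D"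
    unfolding D_def inj_on_def using edge_inj by auto
  have finD: "finite D"
  proof -
    have "D \<subseteq> {..<5} \<times> {..<n}" by (auto simp: D_def en_def)
    then show ?thesis by (auto intro: finite_subset)
  qed
  have sub: "{..<5} \<times> {..<(n - 8) div 2} \<subseteq> D"
  proof
    fix x assume "x \<in> {..<(5::nat)} \<times> {..<(n - 8) div 2}"
    then obtain k i where x: "x = (k, i)" "k < 5" "i < (n - 8) div 2" by auto
    have "2 * ((n - 8) div 2) \<le> n - 8" by simp
    then have "2 * i + 8 < n" using x(3) by linarith
    then show "x \<in> D" using x en_le[of k i] by (simp add: D_def)
  qed
  have "5 * ((n - 8) div 2) = card ({..<(5::nat)} \<times> {..<(n - 8) div 2})" by (simp add: card_cartesian_product)
  also have "\<dots> \<le> card D" using card_mono[OF finD sub] .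
  also have "\<dots> = card (Eset n)" unfolding Eset_def D_def[symmetric] using card_image[OF inj] by simp
  finally show ?thesis .
qed

theorem theorem14:
  shows "\<exists>C::real. \<exists>N::nat. \<forall>n\<ge>N. \<exists>E :: nat set set.
           simple_graph {..<n} E \<and> C4_free {..<n} E \<and> k_planar 2 {..<n} E \<and>
           real (card E) \<ge> 5 / 2 * real n - C"
proof (intro exI allI impI)
  fix n :: nat
  show "simple_graph {..<n} (Eset n) \<and> C4_free {..<n} (Eset n) \<and> k_planar 2 {..<n} (Eset n) \<and>
           real (card (Eset n)) \<ge> 5 / 2 * real n - 23"
  proof (intro conjI)
    show "simple_graph {..<n} (Eset n)"
      unfolding simple_graph_def
    proof (intro conjI)
      show "finite {..<n}" by simp
      show "Eset n \<subseteq> {{u, v} |u v. u \<in> {..<n} \<and> v \<in> {..<n} \<and> u \<noteq> v}"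
      proof
        fix e assume "e \<in> Eset n"
        then obtain k i where ki: "k < 5" "en k i < n" "e = edge k i" using Eset_E by blast
        have "e = {st k i, en k i}" "st k i \<in> {..<n}" "en k i \<in> {..<n}" "st k i \<noteq> en k i"
          using ki st_less_en[of k i] by (auto simp: edge_def)
        then show "e \<in> {{u, v} |u v. u \<in> {..<n} \<and> v \<in> {..<n} \<and> u \<noteq> v}" by blast
      qed
    qed
    show "C4_free {..<n} (Eset n)"
      unfolding C4_free_def
    proof
      assume "\<exists>a b c d. a \<in> {..<n} \<and> b \<in> {..<n} \<and> c \<in> {..<n} \<and> d \<in> {..<n} \<and> distinct [a, b, c, d] \<and>
        {a, b} \<in> Eset n \<and> {b, c} \<in> Eset n \<and> {c, d} \<in> Eset n \<and> {d, a} \<in> Eset n"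
      then obtain a b c d where h: "distinct [a, b, c, d]"
        "{a, b} \<in> Eset n" "{b, c} \<in> Eset n" "{c, d} \<in> Eset n" "{d, a} \<in> Eset n" by blast
      show False
        using c4[OF Eset_P[OF h(2)] Eset_P[OF h(3)] Eset_P[OF h(4)] Eset_P[OF h(5)]] h(1) by auto
    qed
    show "k_planar 2 {..<n} (Eset n)"
      unfolding k_planar_def using drawing crossings_bound by blast
    have c: "5 * ((n - 8) div 2) \<le> card (Eset n)" by (rule card_Eset)
    have "n \<le> 2 * ((n - 8) div 2) + 9" by linarith
    then have "real n \<le> 2 * real ((n - 8) div 2) + 9" by linarith
    moreover have "5 * real ((n - 8) div 2) \<le> real (card (Eset n))" using c by linarith
    ultimately show "real (card (Eset n)) \<ge> 5 / 2 * real n - 23" by linarith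
  qed
qed

end
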